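(* For every operator $\mathtt P\in\partial_z+z^{-1}\mathcal D_-$, the equation $\mathtt P\cdot\Psi=0$ has, up to multiplication by a constant, exactly one nonzero solution $\Psi\in H$, and this solution can be normalized so that $\Psi\in1+H_-$. In particular, for $\mathcal W\in{\rm Gr}^{(0)}_+$ the equation $\mathtt P_{\mathcal W}\cdot\Psi=0$ has a unique solution in $1+H_-$, namely the wave function of $\mathcal W$ (the unique element of $\mathcal W\cap(1+H_-)$).
   Context: $H_+=\mathbb C[z]$, $H_-=z^{-1}\mathbb C[[z^{-1}]]$, $H=H_+\oplus H_-$. ${\rm Gr}^{(0)}_+$ is the set of closed subspaces $\mathcal W\subset H$ with $\pi_+:\mathcal W\to H_+$ (projection along $H_-$) an isomorphism. $\mathcal D=\mathbb C((z^{-1}))[[\partial_z]]$ is the ring of differential operators $\sum_{m\ge0}a_m(z)\partial_z^m$, $a_m\in H$, acting on $H$; $\mathcal D_\pm=H_\pm[[\partial_z]]$. For $\mathcal W\in{\rm Gr}^{(0)}_+$ let $\mathtt G_{\mathcal W}$ be the unique element of $\{\mathtt G\in\mathcal D:\mathtt G-1\in\mathcal D_-\}$ with $\mathcal W=\mathtt G_{\mathcal W}\cdot H_+$ (Sato's theorem), and $\mathtt P_{\mathcal W}:=\mathtt G_{\mathcal W}\partial_z\mathtt G_{\mathcal W}^{-1}$. *)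

theory Defs
  imports "HOL-Analysis.Analysis"
begin

text \<open>Elements of H = C[z] + z^-1 C[[z^-1]] are represented by their coefficient
  functions c :: int => complex, where c n is the coefficient of z^n.\<close>

type_synonym laurent = "int \<Rightarrow> complex"

definition Hsp :: "laurent set" where
  "Hsp = {f. \<exists>N::int. \<forall>n>N. f n = 0}"

definition Hplus :: "laurent set" where
  "Hplus = {f. f \<in> Hsp \<and> (\<forall>n<0. f n = 0)}"

definition Hminus :: "laurent set" where
  "Hminus = {f. \<forall>n\<ge>0. f n = 0}"

definition onePlusHm :: "laurent set" where
  "onePlusHm = {f. f 0 = 1 \<and> (\<forall>n>0. f n = 0)}"

definition pplus :: "laurent \<Rightarrow> laurent" where
  "pplus f = (\<lambda>n. if n \<ge> 0 then f n else 0)"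

text \<open>Falling factorial n(n-1)...(n-m+1) for integer n: d^m z^n = ffact_int n m * z^(n-m).\<close>
definition ffact_int :: "int \<Rightarrow> nat \<Rightarrow> complex" where
  "ffact_int n m = (\<Prod>t<m. of_int (n - int t))"

text \<open>A differential operator sum_m a_m(z) d_z^m is represented by a :: nat => laurent,
  a m being the coefficient function of a_m.\<close>
type_synonym dop = "nat \<Rightarrow> laurent"

definition Dsp :: "dop set" where
  "Dsp = {a. \<forall>m. a m \<in> Hsp}"

definition Dminus :: "dop set" where
  "Dminus = {a. \<forall>m. a m \<in> Hminus}"

definition one_op :: dop where
  "one_op = (\<lambda>m i. if m = 0 \<and> i = 0 then 1 else 0)"

definition dz_op :: dop where
  "dz_op = (\<lambda>m i. if m = 1 \<and> i = 0 then 1 else 0)"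

text \<open>The class d_z + z^-1 D_- : the coefficient of d^m minus delta_{m,1} lies in z^-1 H_-.\<close>
definition Pclass :: "dop set" where
  "Pclass = {a. \<forall>m i. i > -2 \<longrightarrow> a m i = dz_op m i}"

text \<open>Action of an operator on H (coefficientwise; the sums are finite in all cases used).\<close>
definition act :: "dop \<Rightarrow> laurent \<Rightarrow> laurent" where
  "act a f = (\<lambda>j. infsum (\<lambda>(m::nat, i::int). a m i * ffact_int (j - i + int m) m * f (j - i + int m)) UNIV)"

text \<open>Composition of operators: (a_m d^m)(b_n d^n) = sum_k (m choose k) a_m (d^k b_n) d^(m-k+n).\<close>
definition comp_op :: "dop \<Rightarrow> dop \<Rightarrow> dop" where
  "comp_op a b = (\<lambda>r j. infsum (\<lambda>(m::nat, k::nat, i::int).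
      of_nat (m choose k) * a m i * ffact_int (j - i + int k) k * b (r + k - m) (j - i + int k))
      {(m, k, i). k \<le> m \<and> m \<le> r + k})"

definition minus_op :: "dop \<Rightarrow> dop \<Rightarrow> dop" where
  "minus_op a b = (\<lambda>m i. a m i - b m i)"

text \<open>Closedness in the z^-1-adic topology of H.\<close>
definition adic_closed :: "laurent set \<Rightarrow> bool" where
  "adic_closed W \<longleftrightarrow> (\<forall>f\<in>Hsp. (\<forall>N::nat. \<exists>w\<in>W. \<forall>n. n > - int N \<longrightarrow> f n = w n) \<longrightarrow> f \<in> W)"

definition csubspace_H :: "laurent set \<Rightarrow> bool" where
  "csubspace_H W \<longleftrightarrow> W \<subseteq> Hsp \<and> (\<lambda>n. 0) \<in> W \<and>
     (\<forall>f\<in>W. \<forall>g\<in>W. (\<lambda>n. f n + g n) \<in> W) \<and> (\<forall>c. \<forall>f\<in>W. (\<lambda>n. c * f n) \<in> W)"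

definition Gr0 :: "laurent set set" where
  "Gr0 = {W. csubspace_H W \<and> adic_closed W \<and> bij_betw pplus W Hplus}"

definition satoG :: "laurent set \<Rightarrow> dop" where
  "satoG W = (THE G. G \<in> Dsp \<and> minus_op G one_op \<in> Dminus \<and> W = act G ` Hplus)"

definition inv_op :: "dop \<Rightarrow> dop" where
  "inv_op G = (THE K. minus_op K one_op \<in> Dminus \<and> comp_op G K = one_op \<and> comp_op K G = one_op)"

definition P_W :: "laurent set \<Rightarrow> dop" where
  "P_W W = comp_op (comp_op (satoG W) dz_op) (inv_op (satoG W))"

definition wave :: "laurent set \<Rightarrow> laurent" where
  "wave W = (THE psi. psi \<in> W \<and> psi \<in> onePlusHm)"

end

theory Submission
  imports Defs "HOL-Computational_Algebra.Formal_Power_Series"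
begin


lemma fs_summable:
  fixes f :: "'a \<Rightarrow> complex"
  assumes "finite F" "\<And>x. x \<in> A \<Longrightarrow> x \<notin> F \<Longrightarrow> f x = 0"
  shows "f summable_on A"
proof -
  have "f summable_on (A \<inter> F)" using assms(1) by simp
  moreover have "f summable_on (A \<inter> F) \<longleftrightarrow> f summable_on A"
    by (rule summable_on_cong_neutral) (use assms in auto)
  ultimately show ?thesis by simp
qed

lemma fs_infsum:
  fixes f :: "'a \<Rightarrow> complex"
  assumes "finite F" "\<And>x. x \<in> A \<Longrightarrow> x \<notin> F \<Longrightarrow> f x = 0"
  shows "infsum f A = sum f (A \<inter> F)"
proof -
  have "infsum f A = infsum f (A \<inter> F)"
    by (rule infsum_cong_neutral) (use assms in auto)
  also have "\<dots> = sum f (A \<inter> F)" using assms(1) by simp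
  finally show ?thesis .
qed

lemma ffact_0[simp]: "ffact_int n 0 = 1" by (simp add: ffact_int_def)
lemma ffact_Suc: "ffact_int n (Suc m) = ffact_int n m * of_int (n - int m)"
  by (simp add: ffact_int_def)
lemma ffact_1[simp]: "ffact_int n 1 = of_int n" by (simp add: ffact_int_def)
lemma ffact_zero: assumes "0 \<le> n" "n < int m" shows "ffact_int n m = 0"
proof -
  have "nat n \<in> {..<m}" using assms by auto
  moreover have "of_int (n - int (nat n)) = (0::complex)" using assms by simp
  ultimately show ?thesis unfolding ffact_int_def by (metis prod_zero_iff finite_lessThan)
qed
lemma ffact_add: "ffact_int p (n + t) = ffact_int p n * ffact_int (p - int n) t"
  by (induction t) (simp_all add: ffact_Suc algebra_simps)
lemma ffact_gchoose: "ffact_int x m = (of_int x gchoose m) * fact m"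
  unfolding ffact_int_def gbinomial_mult_fact' by (simp add: atLeast0LessThan)
lemma ffact_self: "ffact_int (int n) n = fact n"
  by (simp add: ffact_gchoose binomial_gbinomial[symmetric])

lemma ffact_vandermonde:
  "ffact_int (x + y) m = (\<Sum>k\<le>m. of_nat (m choose k) * ffact_int x k * ffact_int y (m - k))"
proof -
  have "ffact_int (x+y) m = (\<Sum>k=0..m. (of_int x gchoose k) * (of_int y gchoose (m - k))) * fact m"
    by (simp add: ffact_gchoose gbinomial_Vandermonde)
  also have "\<dots> = (\<Sum>k\<le>m. of_nat (m choose k) * ffact_int x k * ffact_int y (m - k))"
    unfolding sum_distrib_right atMost_atLeast0
  proof (rule sum.cong[OF refl])
    fix k assume "k \<in> {0..m}"
    then have "fact k * fact (m - k) * (m choose k) = (fact m :: nat)" by (simp add: binomial_fact_lemma)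
    then have e: "(fact k * fact (m-k) * of_nat (m choose k) :: complex) = fact m" by (metis of_nat_fact of_nat_mult)
    show "(of_int x gchoose k) * (of_int y gchoose (m - k)) * fact m =
          of_nat (m choose k) * ffact_int x k * ffact_int y (m - k)"
      unfolding ffact_gchoose e[symmetric] by (simp add: algebra_simps)
  qed
  finally show ?thesis .
qed


definition C0 :: "dop set" where "C0 = {a. \<forall>m i. 0 < i \<longrightarrow> a m i = 0}"
definition bnd :: "int \<Rightarrow> laurent \<Rightarrow> bool" where "bnd N f \<longleftrightarrow> (\<forall>n>N. f n = 0)"
definition dlt :: "nat \<Rightarrow> laurent" where "dlt n = (\<lambda>l. if l = int n then 1 else 0)"

lemma C0D: "a \<in> C0 \<Longrightarrow> a m i \<noteq> 0 \<Longrightarrow> i \<le> 0"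
  unfolding C0_def by force
lemma bndD: "bnd N f \<Longrightarrow> f n \<noteq> 0 \<Longrightarrow> n \<le> N"
  unfolding bnd_def by force
lemma Hsp_bnd: "f \<in> Hsp \<Longrightarrow> \<exists>N. bnd N f"
  unfolding Hsp_def bnd_def by auto
lemma bnd_Hsp: "bnd N f \<Longrightarrow> f \<in> Hsp"
  unfolding Hsp_def bnd_def by auto
lemma bnd_mono: "bnd N f \<Longrightarrow> N \<le> M \<Longrightarrow> bnd M f"
  unfolding bnd_def by auto
lemma bnd_dlt: "bnd (int n) (dlt n)" unfolding bnd_def dlt_def by auto

lemma act_box:
  assumes a: "a \<in> C0" and f: "bnd N f"
    and nz: "a m i * ffact_int (j - i + int m) m * f (j - i + int m) \<noteq> 0"
  shows "(m, i) \<in> {..nat (N - j)} \<times> {- int (nat (N - j))..0}"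
proof -
  from nz have "a m i \<noteq> 0" "f (j - i + int m) \<noteq> 0" by auto
  then have "i \<le> 0" "j - i + int m \<le> N" using C0D[OF a] bndD[OF f] by auto
  then show ?thesis by auto
qed

lemma act_summable:
  assumes a: "a \<in> C0" and f: "bnd N f"
  shows "(\<lambda>(m::nat, i::int). a m i * ffact_int (j - i + int m) m * f (j - i + int m)) summable_on UNIV"
  by (rule fs_summable[where F="{..nat (N - j)} \<times> {- int (nat (N - j))..0}"])
     (use act_box[OF a f] in auto)

lemma act_bnd:
  assumes a: "a \<in> C0" and f: "bnd N f"
  shows "bnd N (act a f)"
  unfolding bnd_def
proof (intro allI impI)
  fix j assume j: "N < j"
  have "(\<lambda>(m::nat, i::int). a m i * ffact_int (j - i + int m) m * f (j - i + int m)) = (\<lambda>_. 0)"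
  proof (rule ext, clarify)
    fix m i
    show "a m i * ffact_int (j - i + int m) m * f (j - i + int m) = 0"
    proof (rule ccontr)
      assume "a m i * ffact_int (j - i + int m) m * f (j - i + int m) \<noteq> 0"
      then have "a m i \<noteq> 0" "f (j - i + int m) \<noteq> 0" by auto
      then show False using C0D[OF a] bndD[OF f] j by force
    qed
  qed
  then show "act a f j = 0" unfolding act_def by simp
qed

lemma act_Hsp: "a \<in> C0 \<Longrightarrow> f \<in> Hsp \<Longrightarrow> act a f \<in> Hsp"
  using Hsp_bnd act_bnd bnd_Hsp by blast

lemma act_add:
  assumes a: "a \<in> C0" and f: "bnd N f" and g: "bnd N g"
  shows "act a (\<lambda>n. f n + g n) = (\<lambda>j. act a f j + act a g j)"
proof
  fix j
  have "act a (\<lambda>n. f n + g n) j = infsum (\<lambda>x. (\<lambda>(m::nat, i::int). a m i * ffact_int (j - i + int m) m * f (j - i + int m)) x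
     + (\<lambda>(m::nat, i::int). a m i * ffact_int (j - i + int m) m * g (j - i + int m)) x) UNIV"
    unfolding act_def by (rule infsum_cong) (auto simp: algebra_simps)
  also have "\<dots> = act a f j + act a g j"
    unfolding act_def by (rule infsum_add[OF act_summable[OF a f] act_summable[OF a g]])
  finally show "act a (\<lambda>n. f n + g n) j = act a f j + act a g j" .
qed

lemma act_scale: "act a (\<lambda>n. c * f n) = (\<lambda>j. c * act a f j)"
proof
  fix j
  have "act a (\<lambda>n. c * f n) j = infsum (\<lambda>x. c * (\<lambda>(m::nat, i::int). a m i * ffact_int (j - i + int m) m * f (j - i + int m)) x) UNIV"
    unfolding act_def by (rule infsum_cong) (auto simp: algebra_simps)
  also have "\<dots> = c * act a f j" unfolding act_def by (rule infsum_cmult_right')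
  finally show "act a (\<lambda>n. c * f n) j = c * act a f j" .
qed

lemma act_zero: "act a (\<lambda>_. 0) = (\<lambda>_. 0)"
proof
  fix j
  have "(\<lambda>(m::nat, i::int). a m i * ffact_int (j - i + int m) m * (0::complex)) = (\<lambda>_. 0)" by auto
  then show "act a (\<lambda>_. 0) j = 0" unfolding act_def by simp
qed

lemma act_delta:
  "act a (dlt n) j = (\<Sum>m\<le>n. a m (j - int n + int m) * ffact_int (int n) m)"
proof -
  let ?g = "\<lambda>(m::nat, i::int). a m i * ffact_int (j - i + int m) m * dlt n (j - i + int m)"
  let ?h = "\<lambda>m::nat. (m, j - int n + int m)"
  have "act a (dlt n) j = sum ?g (UNIV \<inter> ?h ` {..n})"
    unfolding act_def
  proof (rule fs_infsum)
    fix x assume "x \<notin> ?h ` {..n}"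
    then show "?g x = 0"
    proof (cases x)
      case (Pair m i)
      show ?thesis
      proof (rule ccontr)
        assume nz: "?g x \<noteq> 0"
        then have e: "j - i + int m = int n" using Pair by (auto simp: dlt_def split: if_splits)
        have "ffact_int (j - i + int m) m \<noteq> 0" using nz Pair by auto
        then have "m \<le> n" using ffact_zero[of "int n" m] e by force
        with e Pair \<open>x \<notin> ?h ` {..n}\<close> show False by force
      qed
    qed
  qed auto
  also have "\<dots> = sum (?g \<circ> ?h) {..n}"
    by (simp add: sum.reindex inj_on_def)
  also have "\<dots> = (\<Sum>m\<le>n. a m (j - int n + int m) * ffact_int (int n) m)"
    by (rule sum.cong) (auto simp: dlt_def)
  finally show ?thesis .
qed

lemma act_top:
  assumes a: "\<And>m i. 0 \<le> i \<Longrightarrow> a m i = one_op m i" and h: "\<And>l. j < l \<Longrightarrow> h l = 0"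
  shows "act a h j = h j"
proof -
  let ?g = "\<lambda>(m::nat, i::int). a m i * ffact_int (j - i + int m) m * h (j - i + int m)"
  have "act a h j = sum ?g (UNIV \<inter> {(0,0)})"
    unfolding act_def
  proof (rule fs_infsum)
    fix x assume x: "x \<notin> {(0::nat,0::int)}"
    show "?g x = 0"
    proof (cases x)
      case (Pair m i)
      show ?thesis
      proof (cases "0 \<le> i")
        case True
        then have "a m i = one_op m i" by (rule a)
        then show ?thesis using Pair x by (auto simp: one_op_def)
      next
        case False
        then show ?thesis using Pair h[of "j - i + int m"] by auto
      qed
    qed
  qed auto
  also have "\<dots> = h j" using a[of 0 0] by (simp add: one_op_def)
  finally show ?thesis .
qed

lemma act_one: "act one_op f = f"
proof
  fix j
  let ?g = "\<lambda>(m::nat, i::int). one_op m i * ffact_int (j - i + int m) m * f (j - i + int m)"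
  have "act one_op f j = sum ?g (UNIV \<inter> {(0,0)})"
    unfolding act_def by (rule fs_infsum) (auto simp: one_op_def split: if_splits)
  then show "act one_op f j = f j" by (simp add: one_op_def)
qed

lemma act_dz: "act dz_op f j = of_int (j + 1) * f (j + 1)"
proof -
  let ?g = "\<lambda>(m::nat, i::int). dz_op m i * ffact_int (j - i + int m) m * f (j - i + int m)"
  have "act dz_op f j = sum ?g (UNIV \<inter> {(1,0)})"
    unfolding act_def by (rule fs_infsum) (auto simp: dz_op_def split: if_splits)
  then show ?thesis by (simp add: dz_op_def ffact_Suc)
qed

lemma faithful:
  assumes "\<And>n. act a (dlt n) = act b (dlt n)"
  shows "a = b"
proof -
  have "a m = b m" for m
  proof (induction m rule: less_induct)
    case (less m)
    show ?case
    proof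
      fix j
      have e: "act a (dlt m) j = act b (dlt m) j" using assms by simp
      have s: "(\<Sum>m'<m. a m' (j - int m + int m') * ffact_int (int m) m') =
               (\<Sum>m'<m. b m' (j - int m + int m') * ffact_int (int m) m')"
        using less by (intro sum.cong) auto
      have "{..m} = insert m {..<m}" by auto
      then have "a m j * fact m = b m j * fact m"
        using e s unfolding act_delta by (simp add: ffact_self)
      then show "a m j = b m j" by simp
    qed
  qed
  then show ?thesis by auto
qed


definition Sr :: "nat \<Rightarrow> (nat \<times> nat \<times> int) set" where
  "Sr r = {(m, k, i). k \<le> m \<and> m \<le> r + k}"

lemma comp_op_Sr: "comp_op a b r q = infsum (\<lambda>(m::nat, k::nat, i::int).
      of_nat (m choose k) * a m i * ffact_int (q - i + int k) k * b (r + k - m) (q - i + int k)) (Sr r)"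
  unfolding comp_op_def Sr_def by simp

lemma comp_box:
  assumes a: "a \<in> C0" and b: "b \<in> C0" and x: "(m, k, i) \<in> Sr r"
    and nz: "of_nat (m choose k) * a m i * ffact_int (q - i + int k) k * b (r + k - m) (q - i + int k) \<noteq> 0"
  shows "(m, k, i) \<in> {..r + nat (-q)} \<times> {..nat (-q)} \<times> {q..0}"
proof -
  from nz have "a m i \<noteq> 0" "b (r + k - m) (q - i + int k) \<noteq> 0" by auto
  then have "i \<le> 0" "q - i + int k \<le> 0" using C0D[OF a] C0D[OF b] by auto
  with x show ?thesis by (auto simp: Sr_def)
qed

lemma comp_summable:
  assumes a: "a \<in> C0" and b: "b \<in> C0"
  shows "(\<lambda>(m::nat, k::nat, i::int).
      of_nat (m choose k) * a m i * ffact_int (q - i + int k) k * b (r + k - m) (q - i + int k)) summable_on (Sr r)"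
proof (rule fs_summable[where F="{..r + nat (-q)} \<times> {..nat (-q)} \<times> {q..0}"])
  fix x assume x: "x \<in> Sr r" "x \<notin> {..r + nat (-q)} \<times> {..nat (-q)} \<times> {q..0}"
  obtain m k i where e: "x = (m, k, i)" by (cases x) auto
  show "(\<lambda>(m::nat, k::nat, i::int).
      of_nat (m choose k) * a m i * ffact_int (q - i + int k) k * b (r + k - m) (q - i + int k)) x = 0"
  proof (rule ccontr)
    assume "(\<lambda>(m::nat, k::nat, i::int).
      of_nat (m choose k) * a m i * ffact_int (q - i + int k) k * b (r + k - m) (q - i + int k)) x \<noteq> 0"
    then have "of_nat (m choose k) * a m i * ffact_int (q - i + int k) k * b (r + k - m) (q - i + int k) \<noteq> 0"
      using e by simp
    from comp_box[OF a b _ this] x e show False by simp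
  qed
qed auto

lemma comp_C0:
  assumes a: "a \<in> C0" and b: "b \<in> C0"
  shows "comp_op a b \<in> C0"
  unfolding C0_def mem_Collect_eq
proof (intro allI impI)
  fix r and q :: int assume q: "0 < q"
  have "infsum (\<lambda>(m::nat, k::nat, i::int).
      of_nat (m choose k) * a m i * ffact_int (q - i + int k) k * b (r + k - m) (q - i + int k)) (Sr r) = 0"
  proof (rule infsum_0, clarify)
    fix m k i assume "(m, k, i) \<in> Sr r"
    show "of_nat (m choose k) * a m i * ffact_int (q - i + int k) k * b (r + k - m) (q - i + int k) = 0"
    proof (rule ccontr)
      assume "of_nat (m choose k) * a m i * ffact_int (q - i + int k) k * b (r + k - m) (q - i + int k) \<noteq> 0"
      then have "a m i \<noteq> 0" "b (r + k - m) (q - i + int k) \<noteq> 0" by auto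
      then show False using C0D[OF a] C0D[OF b] q by force
    qed
  qed
  then show "comp_op a b r q = 0" unfolding comp_op_Sr .
qed



lemma act_comp:
  assumes a: "a \<in> C0" and b: "b \<in> C0" and f: "bnd N f"
  shows "act (comp_op a b) f j = act a (act b f) j"
proof -
  define D where "D = nat (N - j)"
  define L5 where "L5 = (\<lambda>((r::nat,q::int),(m::nat,k::nat,i::int)).
     of_nat (m choose k) * a m i * ffact_int (q - i + int k) k * b (r + k - m) (q - i + int k)
       * (ffact_int (j - q + int r) r * f (j - q + int r)))"
  define SL where "SL = Sigma (UNIV::(nat\<times>int) set) (\<lambda>x. Sr (fst x))"
  define R4 where "R4 = (\<lambda>((m::nat,i::int),(n::nat,i'::int)). a m i * ffact_int (j - i + int m) m *
     (b n i' * ffact_int (j - i + int m - i' + int n) n * f (j - i + int m - i' + int n)))"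
  define R5 where "R5 = (\<lambda>(((m::nat,i::int),(n::nat,i'::int)),k::nat). a m i *
     (of_nat (m choose k) * ffact_int i' k * ffact_int (j - i + int m - i') (m - k)) *
     (b n i' * ffact_int (j - i + int m - i' + int n) n * f (j - i + int m - i' + int n)))"
  define SR where "SR = Sigma (UNIV \<times> UNIV :: ((nat\<times>int)\<times>(nat\<times>int)) set) (\<lambda>x. {..fst (fst x)})"

  have A: "act (comp_op a b) f j = infsum (\<lambda>x. infsum (\<lambda>y. L5 (x, y)) (Sr (fst x))) UNIV"
    unfolding act_def
  proof (rule infsum_cong)
    fix x :: "nat \<times> int"
    obtain r q where x: "x = (r, q)" by (cases x)
    have "comp_op a b r q * ffact_int (j - q + int r) r * f (j - q + int r)
       = infsum (\<lambda>(m::nat, k::nat, i::int).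
      of_nat (m choose k) * a m i * ffact_int (q - i + int k) k * b (r + k - m) (q - i + int k)) (Sr r)
         * (ffact_int (j - q + int r) r * f (j - q + int r))"
      unfolding comp_op_Sr by (simp add: mult.assoc)
    also have "\<dots> = infsum (\<lambda>y. L5 (x, y)) (Sr (fst x))"
      unfolding infsum_cmult_left'[symmetric] x fst_conv
      by (rule infsum_cong) (auto simp: L5_def)
    finally show "(\<lambda>(m, i). comp_op a b m i * ffact_int (j - i + int m) m * f (j - i + int m)) x =
      infsum (\<lambda>y. L5 (x, y)) (Sr (fst x))" using x by simp
  qed
  have L5sum: "L5 summable_on SL"
  proof (rule fs_summable[where F="({..D} \<times> {-int D..0}) \<times> ({..D} \<times> {..D} \<times> {-int D..0})"])
    fix x assume x: "x \<in> SL" "x \<notin> ({..D} \<times> {-int D..0}) \<times> ({..D} \<times> {..D} \<times> {-int D..0})"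
    obtain r q m k i where e: "x = ((r, q), (m, k, i))" by (metis prod.collapse)
    show "L5 x = 0"
    proof (rule ccontr)
      assume "L5 x \<noteq> 0"
      then have "a m i \<noteq> 0" "b (r + k - m) (q - i + int k) \<noteq> 0" "f (j - q + int r) \<noteq> 0"
        using e by (auto simp: L5_def)
      then have h: "i \<le> 0" "q - i + int k \<le> 0" "j - q + int r \<le> N"
        using C0D[OF a] C0D[OF b] bndD[OF f] by auto
      have s: "k \<le> m" "m \<le> r + k" using x(1) e by (auto simp: SL_def Sr_def)
      have "0 \<le> int k" "0 \<le> int r" "0 \<le> int m" by auto
      with h s have "int m \<le> N - j" "int k \<le> N - j" "- i \<le> N - j" "int r \<le> N - j"
          "- q \<le> N - j" "q \<le> 0" by linarith+
      then show False using x(2) e h(1) unfolding D_def by auto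
    qed
  qed auto
  have B: "infsum (\<lambda>x. infsum (\<lambda>y. L5 (x, y)) (Sr (fst x))) UNIV = infsum L5 SL"
  proof -
    have "(\<lambda>(x, y). L5 (x, y)) = L5" by auto
    then show ?thesis
      using infsum_Sigma'_banach[of "\<lambda>x y. L5 (x, y)" UNIV "\<lambda>x. Sr (fst x)"] L5sum
      unfolding SL_def by simp
  qed

  have C: "act a (act b f) j = infsum (\<lambda>x. infsum (\<lambda>y. R4 (x, y)) UNIV) UNIV"
    unfolding act_def
  proof (rule infsum_cong)
    fix x :: "nat \<times> int"
    obtain m i where x: "x = (m, i)" by (cases x)
    show "(\<lambda>(m, i). a m i * ffact_int (j - i + int m) m *
            infsum (\<lambda>(ma, ia). b ma ia * ffact_int (j - i + int m - ia + int ma) ma * f (j - i + int m - ia + int ma)) UNIV) x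
        = infsum (\<lambda>y. R4 (x, y)) UNIV"
      unfolding x R4_def by (simp add: infsum_cmult_right'[symmetric] case_prod_unfold)
  qed
  have R4sum: "R4 summable_on (UNIV \<times> UNIV)"
  proof (rule fs_summable[where F="({..D} \<times> {-int D..0}) \<times> ({..D} \<times> {-int D..0})"])
    fix x assume x: "x \<notin> ({..D} \<times> {-int D..0}) \<times> ({..D} \<times> {-int D..0})"
    obtain m i n i' where e: "x = ((m, i), (n, i'))" by (metis prod.collapse)
    show "R4 x = 0"
    proof (rule ccontr)
      assume "R4 x \<noteq> 0"
      then have "a m i \<noteq> 0" "b n i' \<noteq> 0" "f (j - i + int m - i' + int n) \<noteq> 0"
        using e by (auto simp: R4_def)
      then have h: "i \<le> 0" "i' \<le> 0" "j - i + int m - i' + int n \<le> N"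
        using C0D[OF a] C0D[OF b] bndD[OF f] by auto
      from h have "int m \<le> N - j" "int n \<le> N - j" "- i \<le> N - j" "- i' \<le> N - j" by linarith+
      then show False using x e h(1,2) unfolding D_def by auto
    qed
  qed auto
  have D': "infsum (\<lambda>x. infsum (\<lambda>y. R4 (x, y)) UNIV) UNIV = infsum R4 (UNIV \<times> UNIV)"
  proof -
    have "(\<lambda>(x, y). R4 (x, y)) = R4" by auto
    then show ?thesis
      using infsum_Sigma'_banach[of "\<lambda>x y. R4 (x, y)" UNIV "\<lambda>_. UNIV"] R4sum by simp
  qed
  have E: "infsum R4 (UNIV \<times> UNIV) = infsum (\<lambda>x. infsum (\<lambda>k. R5 (x, k)) {..fst (fst x)}) (UNIV \<times> UNIV)"
  proof (rule infsum_cong)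
    fix x :: "(nat \<times> int) \<times> (nat \<times> int)"
    obtain m i n i' where e: "x = ((m, i), (n, i'))" by (metis prod.collapse)
    have v: "ffact_int (j - i + int m) m = (\<Sum>k\<le>m. of_nat (m choose k) * ffact_int i' k * ffact_int (j - i + int m - i') (m - k))"
    proof -
      have e: "i' + (j - i + int m - i') = j - i + int m" by simp
      show ?thesis using ffact_vandermonde[of i' "j - i + int m - i'" m] unfolding e .
    qed
    show "R4 x = infsum (\<lambda>k. R5 (x, k)) {..fst (fst x)}"
      unfolding e R4_def R5_def by (simp add: v sum_distrib_left sum_distrib_right)
  qed
  have R5sum: "R5 summable_on SR"
  proof (rule fs_summable[where F="(({..D} \<times> {-int D..0}) \<times> ({..D} \<times> {-int D..0})) \<times> {..D}"])
    fix x assume x: "x \<in> SR" "x \<notin> (({..D} \<times> {-int D..0}) \<times> ({..D} \<times> {-int D..0})) \<times> {..D}"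
    obtain m i n i' k where e: "x = (((m, i), (n, i')), k)" by (metis prod.collapse)
    show "R5 x = 0"
    proof (rule ccontr)
      assume "R5 x \<noteq> 0"
      then have "a m i \<noteq> 0" "b n i' \<noteq> 0" "f (j - i + int m - i' + int n) \<noteq> 0"
        using e by (auto simp: R5_def)
      then have h: "i \<le> 0" "i' \<le> 0" "j - i + int m - i' + int n \<le> N"
        using C0D[OF a] C0D[OF b] bndD[OF f] by auto
      have "k \<le> m" using x(1) e by (auto simp: SR_def)
      with h have "int m \<le> N - j" "int n \<le> N - j" "- i \<le> N - j" "- i' \<le> N - j" "int k \<le> N - j" by linarith+
      then show False using x e h(1,2) unfolding D_def by auto
    qed
  qed auto
  have F: "infsum (\<lambda>x. infsum (\<lambda>k. R5 (x, k)) {..fst (fst x)}) (UNIV \<times> UNIV) = infsum R5 SR"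
  proof -
    have "(\<lambda>(x, y). R5 (x, y)) = R5" by auto
    then show ?thesis
      using infsum_Sigma'_banach[of "\<lambda>x y. R5 (x, y)" "UNIV \<times> UNIV" "\<lambda>x. {..fst (fst x)}"] R5sum
      unfolding SR_def by simp
  qed
  have G: "infsum R5 SR = infsum L5 SL"
  proof (rule infsum_reindex_bij_witness[where
        j = "\<lambda>(((m,i),(n,i')),k). ((n + m - k, i' + i - int k), (m, k, i))" and
        i = "\<lambda>((r,q),(m,k,i)). (((m,i),(r + k - m, q - i + int k)), k)"])
    fix x assume x: "x \<in> SR"
    obtain m i n i' k where e: "x = (((m, i), (n, i')), k)" by (metis prod.collapse)
    have km: "k \<le> m" using x e by (auto simp: SR_def)
    show "(\<lambda>((r,q),(m,k,i)). (((m,i),(r + k - m, q - i + int k)), k))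
          ((\<lambda>(((m,i),(n,i')),k). ((n + m - k, i' + i - int k), (m, k, i))) x) = x"
      using km e by auto
    show "(\<lambda>(((m,i),(n,i')),k). ((n + m - k, i' + i - int k), (m, k, i))) x \<in> SL"
      using km e by (auto simp: SL_def Sr_def)
    have n1: "n + m - k + k - m = n" using km by simp
    have n2: "int (n + m - k) = int n + int m - int k" using km by simp
    have n3: "ffact_int (j - i + int m - i' + int n) (n + m - k) =
        ffact_int (j - i + int m - i' + int n) n * ffact_int (j - i + int m - i') (m - k)"
    proof -
      have "n + m - k = n + (m - k)" using km by simp
      then show ?thesis by (simp add: ffact_add)
    qed
    show "L5 ((\<lambda>(((m,i),(n,i')),k). ((n + m - k, i' + i - int k), (m, k, i))) x) = R5 x"
      unfolding e L5_def R5_def using n1 n2 n3 by (simp add: algebra_simps)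
  next
    fix y assume y: "y \<in> SL"
    obtain r q m k i where e: "y = ((r, q), (m, k, i))" by (metis prod.collapse)
    have s: "k \<le> m" "m \<le> r + k" using y e by (auto simp: SL_def Sr_def)
    show "(\<lambda>(((m,i),(n,i')),k). ((n + m - k, i' + i - int k), (m, k, i)))
          ((\<lambda>((r,q),(m,k,i)). (((m,i),(r + k - m, q - i + int k)), k)) y) = y"
      using s e by auto
    show "(\<lambda>((r,q),(m,k,i)). (((m,i),(r + k - m, q - i + int k)), k)) y \<in> SR"
      using s e by (auto simp: SR_def)
  qed
  show ?thesis using A B C D' E F G by simp
qed



lemma local_fix:
  fixes F :: "(int \<Rightarrow> 'b) \<Rightarrow> int \<Rightarrow> 'b" and T :: int
  assumes loc: "\<And>f g j. (\<And>l. j < l \<Longrightarrow> l < T \<Longrightarrow> f l = g l) \<Longrightarrow> F f j = F g j"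
  shows "\<exists>h. \<forall>j. h j = F h j"
proof -
  define it where "it n = (F ^^ n) (\<lambda>_. undefined)" for n
  have itS: "it (Suc n) = F (it n)" for n unfolding it_def by simp
  have Q: "\<forall>j m. T - j \<le> int n \<longrightarrow> n \<le> m \<longrightarrow> it (Suc m) j = it (Suc n) j" for n
  proof (induction n)
    case 0
    show ?case
    proof (intro allI impI)
      fix j and m :: nat assume jm: "T - j \<le> int 0" "0 \<le> m"
      show "it (Suc m) j = it (Suc 0) j" unfolding itS
      proof (rule loc)
        fix l assume "j < l" "l < T"
        with jm have False by linarith
        then show "it m l = it 0 l" ..
      qed
    qed
  next
    case (Suc n)
    show ?case
    proof (intro allI impI)
      fix j m assume jm: "T - j \<le> int (Suc n)" "Suc n \<le> m"
      then obtain m' where m': "m = Suc m'" "n \<le> m'" by (cases m) auto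
      show "it (Suc m) j = it (Suc (Suc n)) j"
        unfolding itS[of m] itS[of "Suc n"]
      proof (rule loc)
        fix l assume l: "j < l" "l < T"
        then have tl: "T - l \<le> int n" using jm by simp
        have "it (Suc m') l = it (Suc n) l" using Suc.IH tl m'(2) by blast
        then show "it m l = it (Suc n) l" using m'(1) by simp
      qed
    qed
  qed
  define h where "h j = it (Suc (nat (T - j))) j" for j
  have "h j = F h j" for j
  proof -
    have "h j = F (it (nat (T - j))) j" unfolding h_def itS ..
    also have "\<dots> = F h j"
    proof (rule loc)
      fix l assume l: "j < l" "l < T"
      then obtain k where k: "nat (T - j) = Suc k" "nat (T - l) \<le> k" by (cases "nat (T - j)") auto
      have "it (Suc k) l = it (Suc (nat (T - l))) l"
        by (rule Q[of "nat (T - l)", rule_format]) (use k(2) in auto)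
      then show "it (nat (T - j)) l = h l" unfolding h_def k(1) by simp
    qed
    finally show ?thesis .
  qed
  then show ?thesis by blast
qed

lemma Pclass_dz: "P \<in> Pclass \<Longrightarrow> -2 < i \<Longrightarrow> P m i = dz_op m i"
  unfolding Pclass_def by auto

lemma Pclass_C0: "P \<in> Pclass \<Longrightarrow> P \<in> C0"
  unfolding C0_def using Pclass_dz[of P] by (auto simp: dz_op_def)

lemma act_P_at:
  assumes P: "P \<in> Pclass" and f: "\<And>l. j < l \<Longrightarrow> f l = 0"
  shows "act P f (j - 1) = of_int j * f j"
proof -
  let ?g = "\<lambda>(m::nat, i::int). P m i * ffact_int (j - 1 - i + int m) m * f (j - 1 - i + int m)"
  have "act P f (j - 1) = sum ?g (UNIV \<inter> {(1,0)})"
    unfolding act_def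
  proof (rule fs_infsum)
    fix x assume x: "x \<notin> {(1::nat, 0::int)}"
    obtain m i where e: "x = (m, i)" by (cases x)
    show "?g x = 0"
    proof (cases "-2 < i")
      case True
      then show ?thesis using Pclass_dz[OF P True, of m] x e by (auto simp: dz_op_def)
    next
      case False
      then show ?thesis using f[of "j - 1 - i + int m"] e by auto
    qed
  qed auto
  also have "\<dots> = of_int j * f j" using Pclass_dz[OF P, of 0 1] by (simp add: dz_op_def ffact_Suc)
  finally show ?thesis .
qed

lemma Pclass_zero:
  assumes P: "P \<in> Pclass" and D: "bnd N D" and z: "act P D = (\<lambda>_. 0)" and D0: "D 0 = 0"
  shows "D n = 0"
proof -
  have "D (N - int k) = 0" for k
  proof (induction k rule: less_induct)
    case (less k)
    show ?case
    proof (cases "N - int k = 0")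
      case True then show ?thesis using D0 by simp
    next
      case False
      have all: "D l = 0" if "N - int k < l" for l
      proof (cases "N < l")
        case True then show ?thesis using D unfolding bnd_def by auto
      next
        case False
        then have lk: "nat (N - l) < k" "l = N - int (nat (N - l))" using that by auto
        have "D (N - int (nat (N - l))) = 0" using less lk(1) by blast
        then show ?thesis using lk(2) by simp
      qed
      have "act P D (N - int k - 1) = of_int (N - int k) * D (N - int k)"
        by (rule act_P_at[OF P]) (use all in auto)
      then have "of_int (N - int k) * D (N - int k) = 0" using z by simp
      moreover have "of_int (N - int k) \<noteq> (0::complex)" using False by (metis of_int_eq_0_iff)
      ultimately show ?thesis by simp
    qed
  qed
  then show ?thesis
  proof (cases "N < n")
    case True then show ?thesis using D unfolding bnd_def by auto
  next
    case False
    then have e: "n = N - int (nat (N - n))" by auto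
    have "D (N - int (nat (N - n))) = 0" by fact
    then show ?thesis using e by simp
  qed
qed

definition trz :: "laurent \<Rightarrow> laurent" where "trz f = (\<lambda>l. if l \<le> 0 then f l else 0)"

definition FP :: "dop \<Rightarrow> laurent \<Rightarrow> int \<Rightarrow> complex" where
  "FP P f j = (if 0 < j then 0 else if j = 0 then 1 else
     - infsum (\<lambda>(m::nat, i::int). if i \<le> -2 then P m i * ffact_int (j - 1 - i + int m) m * trz f (j - 1 - i + int m) else 0) UNIV / of_int j)"

lemma FP_loc:
  assumes "\<And>l. j < l \<Longrightarrow> l < 1 \<Longrightarrow> f l = g l"
  shows "FP P f j = FP P g j"
proof -
  have "(\<lambda>(m::nat, i::int). if i \<le> -2 then P m i * ffact_int (j - 1 - i + int m) m * trz f (j - 1 - i + int m) else 0)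
      = (\<lambda>(m::nat, i::int). if i \<le> -2 then P m i * ffact_int (j - 1 - i + int m) m * trz g (j - 1 - i + int m) else 0)"
  proof (rule ext, clarify)
    fix m :: nat and i :: int
    show "(if i \<le> -2 then P m i * ffact_int (j - 1 - i + int m) m * trz f (j - 1 - i + int m) else 0) =
          (if i \<le> -2 then P m i * ffact_int (j - 1 - i + int m) m * trz g (j - 1 - i + int m) else 0)"
      using assms[of "j - 1 - i + int m"] by (auto simp: trz_def)
  qed
  then show ?thesis unfolding FP_def by simp
qed

lemma Pclass_exists:
  assumes P: "P \<in> Pclass"
  shows "\<exists>\<Psi>. \<Psi> \<in> onePlusHm \<and> act P \<Psi> = (\<lambda>_. 0)"
proof -
  obtain h where h: "\<And>j. h j = FP P h j"
    using local_fix[where F="FP P" and T=1] FP_loc by blast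
  have hpos: "h l = 0" if "0 < l" for l using h[of l] that by (simp add: FP_def)
  have h0: "h 0 = 1" using h[of 0] by (simp add: FP_def)
  have bh: "bnd 0 h" unfolding bnd_def using hpos by auto
  have trh: "trz h l = h l" for l unfolding trz_def using hpos by auto
  have "act P h (j - 1) = 0" for j
  proof (cases "0 \<le> j")
    case True
    have "act P h (j - 1) = of_int j * h j" by (rule act_P_at[OF P]) (use hpos True in auto)
    then show ?thesis using True hpos[of j] by (cases "j = 0") auto
  next
    case False
    let ?g = "\<lambda>(m::nat, i::int). P m i * ffact_int (j - 1 - i + int m) m * h (j - 1 - i + int m)"
    let ?g1 = "\<lambda>x. if x = (1::nat, 0::int) then ?g x else 0"
    let ?g2 = "\<lambda>(m::nat, i::int). if i \<le> -2 then P m i * ffact_int (j - 1 - i + int m) m * h (j - 1 - i + int m) else 0"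
    have split0: "?g (m, i) = ?g1 (m, i) + ?g2 (m, i)" for m i
    proof (cases "-2 < i")
      case True
      have "P m i = dz_op m i" by (rule Pclass_dz[OF P True])
      then show ?thesis using True by (cases "m = 1 \<and> i = 0") (auto simp: dz_op_def)
    next
      case False then show ?thesis by simp
    qed
    have split: "?g x = ?g1 x + ?g2 x" for x
      using split0[of "fst x" "snd x"] by (metis prod.collapse)
    have s1: "?g1 summable_on UNIV" by (rule fs_summable[where F="{(1,0)}"]) auto
    have s2: "?g2 summable_on UNIV"
    proof (rule fs_summable[where F="{..nat (0 - (j - 1))} \<times> {- int (nat (0 - (j - 1)))..0}"])
      fix x assume x: "x \<notin> {..nat (0 - (j - 1))} \<times> {- int (nat (0 - (j - 1)))..0}"
      obtain m i where e: "x = (m, i)" by (cases x)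
      show "?g2 x = 0"
      proof (rule ccontr)
        assume "?g2 x \<noteq> 0"
        then have "P m i * ffact_int (j - 1 - i + int m) m * h (j - 1 - i + int m) \<noteq> 0"
          using e by (auto split: if_splits)
        from act_box[OF Pclass_C0[OF P] bh this] x e show False by simp
      qed
    qed auto
    have "act P h (j - 1) = infsum (\<lambda>x. ?g1 x + ?g2 x) UNIV"
      unfolding act_def by (rule infsum_cong) (rule split)
    also have "\<dots> = infsum ?g1 UNIV + infsum ?g2 UNIV" by (rule infsum_add[OF s1 s2])
    finally have E: "act P h (j - 1) = infsum ?g1 UNIV + infsum ?g2 UNIV" .
    have E1: "infsum ?g1 UNIV = of_int j * h j"
    proof -
      have "infsum ?g1 UNIV = sum ?g1 (UNIV \<inter> {(1,0)})" by (rule fs_infsum) auto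
      then show ?thesis using Pclass_dz[OF P, of 0 1] by (simp add: dz_op_def ffact_Suc)
    qed
    have E2: "infsum ?g2 UNIV = - of_int j * h j"
    proof -
      have eq: "(\<lambda>(m::nat, i::int). if i \<le> -2 then P m i * ffact_int (j - 1 - i + int m) m * trz h (j - 1 - i + int m) else 0) = ?g2"
        by (rule ext) (simp add: trh split: prod.split)
      have FPj: "FP P h j = - infsum ?g2 UNIV / of_int j"
        using False unfolding FP_def eq by simp
      have "h j = - infsum ?g2 UNIV / of_int j" using h[of j] FPj by (rule trans)
      then show ?thesis using False by (simp add: field_simps)
    qed
    show ?thesis using E E1 E2 by simp
  qed
  then have "act P h = (\<lambda>_. 0)"
  proof -
    assume a: "\<And>j. act P h (j - 1) = 0"
    show ?thesis
    proof
      fix j show "act P h j = 0" using a[of "j + 1"] by simp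
    qed
  qed
  moreover have "h \<in> onePlusHm" unfolding onePlusHm_def using h0 hpos by auto
  ultimately show ?thesis by blast
qed

lemma Pclass_unique:
  assumes P: "P \<in> Pclass" and h: "h \<in> onePlusHm" "act P h = (\<lambda>_. 0)"
    and \<Psi>: "\<Psi> \<in> Hsp" "act P \<Psi> = (\<lambda>_. 0)"
  shows "\<Psi> = (\<lambda>n. \<Psi> 0 * h n)"
proof -
  obtain N where N: "bnd N \<Psi>" using Hsp_bnd[OF \<Psi>(1)] by blast
  have bh: "bnd 0 h" using h(1) unfolding onePlusHm_def bnd_def by auto
  define M where "M = max N 0"
  define c where "c = - \<Psi> 0"
  define g where "g = (\<lambda>n. c * h n)"
  define D where "D = (\<lambda>n. \<Psi> n + g n)"
  have b1: "bnd M \<Psi>" by (rule bnd_mono[OF N]) (simp add: M_def)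
  have b2: "bnd M g" using bh unfolding bnd_def g_def M_def by auto
  have bD: "bnd M D" using b1 b2 unfolding bnd_def D_def by auto
  have gs: "act P g = (\<lambda>j. c * act P h j)" unfolding g_def by (rule act_scale)
  have "act P D = (\<lambda>j. act P \<Psi> j + act P g j)"
    unfolding D_def by (rule act_add[OF Pclass_C0[OF P] b1 b2])
  also have "\<dots> = (\<lambda>_. 0)" unfolding gs \<Psi>(2) h(2) by simp
  finally have z: "act P D = (\<lambda>_. 0)" .
  have D0: "D 0 = 0" using h(1) unfolding onePlusHm_def D_def g_def c_def by simp
  have e: "\<Psi> n = \<Psi> 0 * h n" for n
  proof -
    have "D n = 0" by (rule Pclass_zero[OF P bD z D0])
    then have "\<Psi> n - \<Psi> 0 * h n = 0" unfolding D_def g_def c_def by simp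
    then show ?thesis by simp
  qed
  show ?thesis by (rule ext, rule e)
qed

lemma part1:
  assumes P: "P \<in> Pclass"
  shows "(\<exists>\<Psi>\<in>onePlusHm. act P \<Psi> = (\<lambda>n. 0)) \<and>
         (\<forall>\<Psi>1\<in>Hsp. \<forall>\<Psi>2\<in>Hsp. \<Psi>1 \<noteq> (\<lambda>n. 0) \<longrightarrow> act P \<Psi>1 = (\<lambda>n. 0) \<longrightarrow>
                act P \<Psi>2 = (\<lambda>n. 0) \<longrightarrow> (\<exists>c::complex. \<Psi>2 = (\<lambda>n. c * \<Psi>1 n)))"
proof -
  obtain h where h: "h \<in> onePlusHm" "act P h = (\<lambda>_. 0)" using Pclass_exists[OF P] by blast
  have "\<exists>c. \<Psi>2 = (\<lambda>n. c * \<Psi>1 n)"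
    if a: "\<Psi>1 \<in> Hsp" "\<Psi>2 \<in> Hsp" "\<Psi>1 \<noteq> (\<lambda>n. 0)" "act P \<Psi>1 = (\<lambda>n. 0)" "act P \<Psi>2 = (\<lambda>n. 0)"
    for \<Psi>1 \<Psi>2
  proof -
    have e1: "\<Psi>1 = (\<lambda>n. \<Psi>1 0 * h n)" by (rule Pclass_unique[OF P h a(1) a(4)])
    have e2: "\<Psi>2 = (\<lambda>n. \<Psi>2 0 * h n)" by (rule Pclass_unique[OF P h a(2) a(5)])
    have nz: "\<Psi>1 0 \<noteq> 0"
    proof
      assume "\<Psi>1 0 = 0"
      then have "\<Psi>1 = (\<lambda>n. 0)" using e1 by (metis mult_zero_left)
      then show False using a(3) by simp
    qed
    have e3: "\<Psi>2 n = (\<Psi>2 0 / \<Psi>1 0) * \<Psi>1 n" for n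
    proof -
      have "\<Psi>2 n = \<Psi>2 0 * h n" using fun_cong[OF e2, of n] by simp
      moreover have "\<Psi>1 n = \<Psi>1 0 * h n" using fun_cong[OF e1, of n] by simp
      ultimately show ?thesis using nz by simp
    qed
    have "\<Psi>2 = (\<lambda>n. (\<Psi>2 0 / \<Psi>1 0) * \<Psi>1 n)" by (rule ext, rule e3)
    then show ?thesis by blast
  qed
  then show ?thesis using h by blast
qed



definition G1 :: "dop set" where "G1 = {G. \<forall>m i. 0 \<le> i \<longrightarrow> G m i = one_op m i}"

lemma G1_iff: "minus_op G one_op \<in> Dminus \<longleftrightarrow> G \<in> G1"
  unfolding G1_def Dminus_def Hminus_def minus_op_def by auto

lemma G1D: "G \<in> G1 \<Longrightarrow> 0 \<le> i \<Longrightarrow> G m i = one_op m i"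
  unfolding G1_def by auto

lemma G1_C0: "G \<in> G1 \<Longrightarrow> G \<in> C0"
  unfolding C0_def G1_def one_op_def by auto

lemma one_C0: "one_op \<in> C0" unfolding C0_def one_op_def by auto
lemma dz_C0: "dz_op \<in> C0" unfolding C0_def dz_op_def by auto

lemma G_dlt_top:
  assumes G: "G \<in> G1"
  shows "act G (dlt d) (int d) = 1" and "\<And>j. int d < j \<Longrightarrow> act G (dlt d) j = 0"
proof -
  show "act G (dlt d) (int d) = 1"
    using act_top[of G "int d" "dlt d"] G1D[OF G] by (auto simp: dlt_def)
  fix j assume "int d < j"
  then show "act G (dlt d) j = 0" using act_bnd[OF G1_C0[OF G] bnd_dlt[of d]] unfolding bnd_def by auto
qed

lemma G_zero:
  assumes G: "G \<in> G1" and h: "bnd N h" and z: "act G h = (\<lambda>_. 0)"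
  shows "h n = 0"
proof -
  have "h (N - int k) = 0" for k
  proof (induction k rule: less_induct)
    case (less k)
    have all: "h l = 0" if "N - int k < l" for l
    proof (cases "N < l")
      case True then show ?thesis using h unfolding bnd_def by auto
    next
      case False
      then have lk: "nat (N - l) < k" "l = N - int (nat (N - l))" using that by auto
      have "h (N - int (nat (N - l))) = 0" using less lk(1) by blast
      then show ?thesis using lk(2) by simp
    qed
    have "act G h (N - int k) = h (N - int k)"
      by (rule act_top) (use G1D[OF G] all in auto)
    then show ?case using z by simp
  qed
  then show ?thesis
  proof (cases "N < n")
    case True then show ?thesis using h unfolding bnd_def by auto
  next
    case False
    then have e: "n = N - int (nat (N - n))" by auto
    have "h (N - int (nat (N - n))) = 0" by fact
    then show ?thesis using e by simp
  qed
qed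

lemma G_inj:
  assumes G: "G \<in> G1" and u: "bnd N u" and v: "bnd N v" and e: "act G u = act G v"
  shows "u = v"
proof -
  define w where "w = (\<lambda>n. (-1) * v n)"
  have bw: "bnd N w" using v unfolding bnd_def w_def by auto
  have "act G (\<lambda>n. u n + w n) = (\<lambda>j. act G u j + act G w j)"
    by (rule act_add[OF G1_C0[OF G] u bw])
  also have "\<dots> = (\<lambda>_. 0)" unfolding w_def act_scale e by simp
  finally have z: "act G (\<lambda>n. u n + w n) = (\<lambda>_. 0)" .
  have b: "bnd N (\<lambda>n. u n + w n)" using u bw unfolding bnd_def by auto
  have "u n + w n = 0" for n using G_zero[OF G b z] .
  then have "u n = v n" for n unfolding w_def by (simp add: algebra_simps)
  then show ?thesis by (rule ext)
qed

section \<open>Grassmannian facts\<close>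

lemma Gr0D:
  assumes "W \<in> Gr0"
  shows "W \<subseteq> Hsp" "(\<lambda>n. 0) \<in> W" "\<And>f g. f \<in> W \<Longrightarrow> g \<in> W \<Longrightarrow> (\<lambda>n. f n + g n) \<in> W"
    "\<And>c f. f \<in> W \<Longrightarrow> (\<lambda>n. c * f n) \<in> W" "bij_betw pplus W Hplus"
  using assms unfolding Gr0_def csubspace_H_def by auto

lemma W_inj:
  assumes "W \<in> Gr0" "w \<in> W" "w' \<in> W" "pplus w = pplus w'"
  shows "w = w'"
  using Gr0D(5)[OF assms(1)] assms(2-4) unfolding bij_betw_def inj_on_def by blast

lemma W_Hm:
  assumes W: "W \<in> Gr0" and w: "w \<in> W" and z: "\<And>l. 0 \<le> l \<Longrightarrow> w l = 0"
  shows "w = (\<lambda>_. 0)"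
proof (rule W_inj[OF W w Gr0D(2)[OF W]])
  show "pplus w = pplus (\<lambda>_. 0)" unfolding pplus_def using z by auto
qed

definition wsec :: "laurent set \<Rightarrow> laurent \<Rightarrow> laurent" where
  "wsec W p = the_inv_into W pplus p"

lemma wsec:
  assumes W: "W \<in> Gr0" and p: "p \<in> Hplus"
  shows "wsec W p \<in> W" "pplus (wsec W p) = p"
proof -
  have b: "bij_betw pplus W Hplus" by (rule Gr0D(5)[OF W])
  show "wsec W p \<in> W" unfolding wsec_def
    by (rule the_inv_into_into) (use b p in \<open>auto simp: bij_betw_def\<close>)
  show "pplus (wsec W p) = p" unfolding wsec_def
    by (rule f_the_inv_into_f_bij_betw[OF b p])
qed

lemma pplus_Hplus: "bnd N f \<Longrightarrow> pplus f \<in> Hplus"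
  unfolding Hplus_def Hsp_def pplus_def bnd_def by auto

lemma Hplus_bnd: "h \<in> Hplus \<Longrightarrow> \<exists>N. bnd N h"
  unfolding Hplus_def using Hsp_bnd by auto

lemma dlt_Hplus: "dlt n \<in> Hplus"
  unfolding Hplus_def Hsp_def dlt_def by auto

section \<open>Uniqueness of Sato's operator\<close>

lemma sato_unique:
  assumes W: "W \<in> Gr0" and G: "G \<in> G1" and G': "G' \<in> G1"
    and GW: "\<And>n. act G (dlt n) \<in> W" and G'W: "\<And>n. act G' (dlt n) \<in> W"
  shows "G = G'"
proof -
  have "G m = G' m" for m
  proof (induction m rule: less_induct)
    case (less m)
    define v where "v = (\<lambda>j. act G (dlt m) j + (-1) * act G' (dlt m) j)"
    have vW: "v \<in> W" unfolding v_def
      by (rule Gr0D(3)[OF W GW Gr0D(4)[OF W G'W]])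
    have "{..m} = insert m {..<m}" by auto
    then have ve: "v j = (G m j - G' m j) * fact m" for j
    proof -
      assume s: "{..m} = insert m {..<m}"
      have c: "(\<Sum>m'<m. G m' (j - int m + int m') * ffact_int (int m) m') =
               (\<Sum>m'<m. G' m' (j - int m + int m') * ffact_int (int m) m')"
        using less by (intro sum.cong) auto
      show ?thesis unfolding v_def act_delta s using c by (simp add: ffact_self algebra_simps)
    qed
    have "v = (\<lambda>_. 0)"
    proof (rule W_Hm[OF W vW])
      fix l :: int assume "0 \<le> l"
      then show "v l = 0" unfolding ve using G1D[OF G] G1D[OF G'] by simp
    qed
    then have "(G m j - G' m j) * fact m = 0" for j using ve by (metis)
    then show ?case by (simp add: fun_eq_iff)
  qed
  then show ?thesis by (rule ext)
qed


section \<open>Existence of Sato's operator\<close>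

definition rS :: "nat \<Rightarrow> (nat \<Rightarrow> laurent) \<Rightarrow> laurent" where
  "rS n a = (\<lambda>l. \<Sum>m<n. a m (l - int n + int m) * ffact_int (int n) m)"
definition tgt :: "nat \<Rightarrow> (nat \<Rightarrow> laurent) \<Rightarrow> laurent" where
  "tgt n a = pplus (\<lambda>l. rS n a l + (if n = 0 \<and> l = 0 then 1 else 0))"
definition SF :: "laurent set \<Rightarrow> (int \<Rightarrow> laurent) \<Rightarrow> int \<Rightarrow> laurent" where
  "SF W A j = (if 0 < j then (\<lambda>_. 0) else
     (\<lambda>l. (wsec W (tgt (nat (-j)) (\<lambda>m. A (- int m))) l - rS (nat (-j)) (\<lambda>m. A (- int m)) l) / fact (nat (-j))))"

lemma rS_cong: "(\<And>m. m < n \<Longrightarrow> a m = a' m) \<Longrightarrow> rS n a = rS n a'"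
  unfolding rS_def by (intro ext sum.cong) auto

lemma tgt_cong: "(\<And>m. m < n \<Longrightarrow> a m = a' m) \<Longrightarrow> tgt n a = tgt n a'"
  unfolding tgt_def using rS_cong[of n a a'] by simp

lemma SF_loc:
  assumes "\<And>l. j < l \<Longrightarrow> l < 1 \<Longrightarrow> A l = A' l"
  shows "SF W A j = SF W A' j"
proof (cases "0 < j")
  case True then show ?thesis unfolding SF_def by simp
next
  case False
  have "(\<lambda>m. A (- int m)) m = (\<lambda>m. A' (- int m)) m" if "m < nat (-j)" for m
    using assms[of "- int m"] that False by auto
  then show ?thesis unfolding SF_def
    using rS_cong[of "nat (-j)" "\<lambda>m. A (- int m)" "\<lambda>m. A' (- int m)"]
      tgt_cong[of "nat (-j)" "\<lambda>m. A (- int m)" "\<lambda>m. A' (- int m)"] by simp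
qed

lemma G1_bnd: "G \<in> G1 \<Longrightarrow> bnd 0 (G m)"
  unfolding bnd_def using G1D[of G] by (auto simp: one_op_def)

lemma rS_bnd:
  assumes "\<And>m. m < n \<Longrightarrow> bnd 0 (a m)"
  shows "bnd (int n) (rS n a)"
  unfolding bnd_def rS_def
proof (intro allI impI)
  fix l assume l: "int n < l"
  show "(\<Sum>m<n. a m (l - int n + int m) * ffact_int (int n) m) = 0"
  proof (rule sum.neutral, intro ballI)
    fix m assume "m \<in> {..<n}"
    then have "a m (l - int n + int m) = 0" using assms[of m] l unfolding bnd_def by auto
    then show "a m (l - int n + int m) * ffact_int (int n) m = 0" by simp
  qed
qed

lemma tgt_Hplus:
  assumes "\<And>m. m < n \<Longrightarrow> bnd 0 (a m)"
  shows "tgt n a \<in> Hplus"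
  unfolding tgt_def
proof (rule pplus_Hplus)
  show "bnd (int n) (\<lambda>l. rS n a l + (if n = 0 \<and> l = 0 then 1 else 0))"
    using rS_bnd[OF assms] unfolding bnd_def by auto
qed

lemma act_G_rS:
  "act G (dlt n) j = rS n G j + G n j * fact n"
proof -
  have "{..n} = insert n {..<n}" by auto
  then show ?thesis unfolding act_delta rS_def by (simp add: ffact_self)
qed

lemma sato_exists:
  assumes W: "W \<in> Gr0"
  shows "\<exists>G. G \<in> G1 \<and> (\<forall>n. act G (dlt n) \<in> W)"
proof -
  obtain A where A: "\<And>j. A j = SF W A j"
    using local_fix[where F="SF W" and T=1] SF_loc by blast
  define G where "G = (\<lambda>m. A (- int m))"
  have Gn: "G n = (\<lambda>l. (wsec W (tgt n G) l - rS n G l) / fact n)" for n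
  proof -
    have "G n = SF W A (- int n)" unfolding G_def by (rule A)
    also have "\<dots> = (\<lambda>l. (wsec W (tgt n G) l - rS n G l) / fact n)"
      unfolding SF_def G_def by simp
    finally show ?thesis .
  qed
  have row: "\<forall>l. 0 \<le> l \<longrightarrow> G n l = one_op n l" for n
  proof (induction n rule: less_induct)
    case (less n)
    have bm: "bnd 0 (G m)" if "m < n" for m
      unfolding bnd_def using less[OF that] by (auto simp: one_op_def)
    have tH: "tgt n G \<in> Hplus" by (rule tgt_Hplus[OF bm])
    show ?case
    proof (intro allI impI)
      fix l :: int assume l0: "0 \<le> l"
      have "G n l = (wsec W (tgt n G) l - rS n G l) / fact n" by (rule fun_cong[OF Gn[of n]])
      also have "wsec W (tgt n G) l = tgt n G l"
      proof -
        have "pplus (wsec W (tgt n G)) l = tgt n G l" using wsec(2)[OF W tH] by simp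
        then show ?thesis using l0 unfolding pplus_def by simp
      qed
      also have "tgt n G l = rS n G l + (if n = 0 \<and> l = 0 then 1 else 0)"
        unfolding tgt_def pplus_def using l0 by simp
      finally show "G n l = one_op n l" by (auto simp: one_op_def)
    qed
  qed
  have GG1: "G \<in> G1" unfolding G1_def using row by auto
  have "act G (dlt n) \<in> W" for n
  proof -
    have tH: "tgt n G \<in> Hplus" by (rule tgt_Hplus[OF G1_bnd[OF GG1]])
    have "act G (dlt n) = wsec W (tgt n G)"
    proof
      fix j
      have "G n j = (wsec W (tgt n G) j - rS n G j) / fact n" by (rule fun_cong[OF Gn[of n]])
      then show "act G (dlt n) j = wsec W (tgt n G) j"
        unfolding act_G_rS by simp
    qed
    then show ?thesis using wsec(1)[OF W tH] by simp
  qed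
  then show ?thesis using GG1 by blast
qed


lemma Hplus_comb:
  assumes "h \<in> Hplus"
  shows "(\<lambda>l. h l + c * dlt d l) \<in> Hplus"
  using assms unfolding Hplus_def Hsp_def dlt_def
  by (auto) (metis (no_types) max.strict_boundedE not_less_iff_gr_or_eq of_nat_less_iff)

lemma GH_sub:
  assumes W: "W \<in> Gr0" and G: "G \<in> G1" and GW: "\<And>n. act G (dlt n) \<in> W"
  shows "h \<in> Hplus \<Longrightarrow> act G h \<in> W"
proof -
  have "\<forall>h. h \<in> Hplus \<longrightarrow> (\<forall>l. int d \<le> l \<longrightarrow> h l = 0) \<longrightarrow> act G h \<in> W" for d
  proof (induction d)
    case 0
    show ?case
    proof (intro allI impI)
      fix h assume h: "h \<in> Hplus" "\<forall>l. int 0 \<le> l \<longrightarrow> h l = 0"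
      have "h = (\<lambda>_. 0)"
      proof
        fix l show "h l = 0" using h unfolding Hplus_def by (cases "0 \<le> l") auto
      qed
      then show "act G h \<in> W" using act_zero Gr0D(2)[OF W] by simp
    qed
  next
    case (Suc d)
    show ?case
    proof (intro allI impI)
      fix h assume h: "h \<in> Hplus" "\<forall>l. int (Suc d) \<le> l \<longrightarrow> h l = 0"
      define h' where "h' = (\<lambda>l. if l = int d then 0 else h l)"
      define c where "c = h (int d)"
      have h'H: "h' \<in> Hplus" using h(1) unfolding Hplus_def Hsp_def h'_def by auto
      have h'z: "\<forall>l. int d \<le> l \<longrightarrow> h' l = 0" using h(2) unfolding h'_def by auto
      have b1: "bnd (int d) h'" using h'z unfolding bnd_def by auto
      have b2: "bnd (int d) (\<lambda>l. c * dlt d l)" using bnd_dlt[of d] unfolding bnd_def by auto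
      have he: "h = (\<lambda>l. h' l + c * dlt d l)"
        unfolding h'_def c_def dlt_def by (auto simp: fun_eq_iff)
      have "act G h = (\<lambda>j. act G h' j + act G (\<lambda>l. c * dlt d l) j)"
        unfolding he by (rule act_add[OF G1_C0[OF G] b1 b2])
      also have "\<dots> = (\<lambda>j. act G h' j + c * act G (dlt d) j)" unfolding act_scale ..
      finally have e: "act G h = (\<lambda>j. act G h' j + c * act G (dlt d) j)" .
      have "act G h' \<in> W" using Suc h'H h'z by blast
      moreover have "(\<lambda>j. c * act G (dlt d) j) \<in> W" by (rule Gr0D(4)[OF W GW])
      ultimately show "act G h \<in> W" unfolding e by (rule Gr0D(3)[OF W])
    qed
  qed
  moreover assume h: "h \<in> Hplus"
  moreover obtain N where "bnd N h" using Hplus_bnd[OF h] by blast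
  then have "\<forall>l. int (nat (N + 1)) \<le> l \<longrightarrow> h l = 0" unfolding bnd_def by auto
  ultimately show "act G h \<in> W" by blast
qed

lemma GH_sup:
  assumes W: "W \<in> Gr0" and G: "G \<in> G1" and GW: "\<And>n. act G (dlt n) \<in> W"
  shows "w \<in> W \<Longrightarrow> \<exists>h\<in>Hplus. act G h = w"
proof -
  have "\<forall>w. w \<in> W \<longrightarrow> (\<forall>l. int d \<le> l \<longrightarrow> w l = 0) \<longrightarrow> (\<exists>h\<in>Hplus. act G h = w)" for d
  proof (induction d)
    case 0
    show ?case
    proof (intro allI impI)
      fix w assume w: "w \<in> W" "\<forall>l. int 0 \<le> l \<longrightarrow> w l = 0"
      have "w = (\<lambda>_. 0)" by (rule W_Hm[OF W w(1)]) (use w(2) in auto)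
      moreover have "(\<lambda>_. 0) \<in> Hplus" unfolding Hplus_def Hsp_def by auto
      ultimately show "\<exists>h\<in>Hplus. act G h = w" using act_zero by metis
    qed
  next
    case (Suc d)
    show ?case
    proof (intro allI impI)
      fix w assume w: "w \<in> W" "\<forall>l. int (Suc d) \<le> l \<longrightarrow> w l = 0"
      define c where "c = w (int d)"
      define w' where "w' = (\<lambda>l. w l + (- c) * act G (dlt d) l)"
      have w'W: "w' \<in> W" unfolding w'_def by (rule Gr0D(3)[OF W w(1) Gr0D(4)[OF W GW]])
      have w'z: "\<forall>l. int d \<le> l \<longrightarrow> w' l = 0"
      proof (intro allI impI)
        fix l assume l: "int d \<le> l"
        show "w' l = 0"
        proof (cases "l = int d")
          case True then show ?thesis unfolding w'_def c_def using G_dlt_top(1)[OF G] by simp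
        next
          case False
          then have "int d < l" using l by simp
          then show ?thesis unfolding w'_def using G_dlt_top(2)[OF G] w(2) by simp
        qed
      qed
      obtain h' where h': "h' \<in> Hplus" "act G h' = w'" using Suc w'W w'z by blast
      obtain N where N: "bnd N h'" using Hplus_bnd[OF h'(1)] by blast
      define M where "M = max N (int d)"
      have b1: "bnd M h'" by (rule bnd_mono[OF N]) (simp add: M_def)
      have b2: "bnd M (\<lambda>l. c * dlt d l)" using bnd_dlt[of d] unfolding bnd_def M_def by auto
      have "act G (\<lambda>l. h' l + c * dlt d l) = (\<lambda>j. act G h' j + act G (\<lambda>l. c * dlt d l) j)"
        by (rule act_add[OF G1_C0[OF G] b1 b2])
      also have "\<dots> = (\<lambda>j. w' j + c * act G (dlt d) j)" unfolding act_scale h'(2) ..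
      also have "\<dots> = w" unfolding w'_def by (simp add: fun_eq_iff)
      finally have "act G (\<lambda>l. h' l + c * dlt d l) = w" .
      moreover have "(\<lambda>l. h' l + c * dlt d l) \<in> Hplus" by (rule Hplus_comb[OF h'(1)])
      ultimately show "\<exists>h\<in>Hplus. act G h = w" by blast
    qed
  qed
  moreover assume w: "w \<in> W"
  moreover obtain N where "bnd N w" using Hsp_bnd Gr0D(1)[OF W] w by blast
  then have "\<forall>l. int (nat (N + 1)) \<le> l \<longrightarrow> w l = 0" unfolding bnd_def by auto
  ultimately show "\<exists>h\<in>Hplus. act G h = w" by blast
qed

lemma G1_Dsp: "G \<in> G1 \<Longrightarrow> G \<in> Dsp"
  unfolding Dsp_def using G1_bnd bnd_Hsp by blast

lemma satoG_char:
  assumes W: "W \<in> Gr0"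
  shows "satoG W \<in> G1" "\<And>n. act (satoG W) (dlt n) \<in> W" "W = act (satoG W) ` Hplus"
proof -
  obtain G where G: "G \<in> G1" "\<And>n. act G (dlt n) \<in> W" using sato_exists[OF W] by blast
  have WG: "W = act G ` Hplus"
  proof
    show "W \<subseteq> act G ` Hplus" using GH_sup[OF W G] by blast
    show "act G ` Hplus \<subseteq> W" using GH_sub[OF W G] by blast
  qed
  have "satoG W = G" unfolding satoG_def
  proof (rule the_equality)
    show "G \<in> Dsp \<and> minus_op G one_op \<in> Dminus \<and> W = act G ` Hplus"
      using G1_Dsp[OF G(1)] G1_iff G(1) WG by blast
  next
    fix G' assume G': "G' \<in> Dsp \<and> minus_op G' one_op \<in> Dminus \<and> W = act G' ` Hplus"
    then have "G' \<in> G1" using G1_iff by blast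
    moreover have "act G' (dlt n) \<in> W" for n using G' dlt_Hplus by blast
    ultimately show "G' = G" using sato_unique[OF W _ G(1) _ G(2)] by blast
  qed
  then show "satoG W \<in> G1" "\<And>n. act (satoG W) (dlt n) \<in> W" "W = act (satoG W) ` Hplus"
    using G WG by auto
qed


section \<open>Inverse operator\<close>

lemma comp_add_left:
  assumes a: "a \<in> C0" and a': "a' \<in> C0" and b: "b \<in> C0"
  shows "comp_op (\<lambda>m i. a m i + a' m i) b r q = comp_op a b r q + comp_op a' b r q"
proof -
  have "comp_op (\<lambda>m i. a m i + a' m i) b r q = infsum (\<lambda>x.
      (\<lambda>(m::nat, k::nat, i::int). of_nat (m choose k) * a m i * ffact_int (q - i + int k) k * b (r + k - m) (q - i + int k)) x +
      (\<lambda>(m::nat, k::nat, i::int). of_nat (m choose k) * a' m i * ffact_int (q - i + int k) k * b (r + k - m) (q - i + int k)) x) (Sr r)"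
    unfolding comp_op_Sr by (rule infsum_cong) (auto simp: algebra_simps)
  also have "\<dots> = comp_op a b r q + comp_op a' b r q"
    unfolding comp_op_Sr by (rule infsum_add[OF comp_summable[OF a b] comp_summable[OF a' b]])
  finally show ?thesis .
qed

lemma comp_one_left: "comp_op one_op b = b"
proof (intro ext)
  fix r q
  let ?g = "\<lambda>(m::nat, k::nat, i::int). of_nat (m choose k) * one_op m i * ffact_int (q - i + int k) k * b (r + k - m) (q - i + int k)"
  have "comp_op one_op b r q = sum ?g (Sr r \<inter> {(0,0,0)})"
    unfolding comp_op_Sr by (rule fs_infsum) (auto simp: one_op_def Sr_def split: if_splits)
  also have "Sr r \<inter> {(0,0,0)} = {(0,0,0)}" by (auto simp: Sr_def)
  finally show "comp_op one_op b r q = b r q" by (simp add: one_op_def)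
qed

definition trK :: "(int \<Rightarrow> nat \<Rightarrow> complex) \<Rightarrow> dop" where
  "trK h = (\<lambda>r l. if l \<le> 0 then h l r else 0)"
definition KF :: "dop \<Rightarrow> (int \<Rightarrow> nat \<Rightarrow> complex) \<Rightarrow> int \<Rightarrow> nat \<Rightarrow> complex" where
  "KF Nop h j = (\<lambda>r. one_op r j - comp_op Nop (trK h) r j)"

lemma KF_loc:
  assumes Nn: "\<And>m i. 0 \<le> i \<Longrightarrow> Nop m i = 0" and e: "\<And>l. j < l \<Longrightarrow> l < 1 \<Longrightarrow> h l = h' l"
  shows "KF Nop h j = KF Nop h' j"
proof -
  have "comp_op Nop (trK h) r j = comp_op Nop (trK h') r j" for r
    unfolding comp_op_Sr
  proof (rule infsum_cong, clarify)
    fix m k i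
    show "of_nat (m choose k) * Nop m i * ffact_int (j - i + int k) k * trK h (r + k - m) (j - i + int k) =
          of_nat (m choose k) * Nop m i * ffact_int (j - i + int k) k * trK h' (r + k - m) (j - i + int k)"
    proof (cases "0 \<le> i")
      case True then show ?thesis using Nn by simp
    next
      case False
      then show ?thesis unfolding trK_def using e[of "j - i + int k"] by auto
    qed
  qed
  then show ?thesis unfolding KF_def by simp
qed

lemma comp_zero_pos:
  assumes Nn: "\<And>m i. 0 \<le> i \<Longrightarrow> Nop m i = 0" and b: "\<And>r l. 0 < l \<Longrightarrow> b r l = 0" and j: "0 \<le> j"
  shows "comp_op Nop b r j = 0"
  unfolding comp_op_Sr
proof (rule infsum_0, clarify)
  fix m k i
  show "of_nat (m choose k) * Nop m i * ffact_int (j - i + int k) k * b (r + k - m) (j - i + int k) = 0"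
  proof (cases "0 \<le> i")
    case True then show ?thesis using Nn by simp
  next
    case False then show ?thesis using b[of "j - i + int k"] j by simp
  qed
qed

lemma inverse_exists:
  assumes G: "G \<in> G1"
  shows "\<exists>K. K \<in> G1 \<and> comp_op G K = one_op"
proof -
  define Nop where "Nop = minus_op G one_op"
  have Nn: "Nop m i = 0" if "0 \<le> i" for m i
    unfolding Nop_def minus_op_def using G1D[OF G that] by simp
  have NC0: "Nop \<in> C0" unfolding C0_def using Nn by auto
  have "\<exists>h. \<forall>j. h j = KF Nop h j"
    by (rule local_fix[where F="KF Nop" and T=1], rule KF_loc[OF Nn], assumption)
  then obtain h where h: "\<And>j. h j = KF Nop h j" by blast
  define K where "K = (\<lambda>r j. h j r)"
  have Kj: "K r j = one_op r j - comp_op Nop (trK h) r j" for r j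
    unfolding K_def using fun_cong[OF h[of j], of r] unfolding KF_def by simp
  have Kpos: "K r j = one_op r j" if "0 \<le> j" for r j
  proof -
    have "comp_op Nop (trK h) r j = 0"
      by (rule comp_zero_pos[OF Nn _ that]) (auto simp: trK_def)
    then show ?thesis using Kj by simp
  qed
  have KG1: "K \<in> G1" unfolding G1_def using Kpos by auto
  have trKe: "trK h = K"
  proof (intro ext)
    fix r l
    show "trK h r l = K r l"
    proof (cases "l \<le> 0")
      case True then show ?thesis unfolding trK_def K_def by simp
    next
      case False then show ?thesis unfolding trK_def using Kpos[of l r] by (simp add: one_op_def)
    qed
  qed
  have Ge: "G = (\<lambda>m i. one_op m i + Nop m i)" unfolding Nop_def minus_op_def by simp
  have "comp_op G K r j = one_op r j" for r j
  proof -
    have "comp_op G K r j = comp_op one_op K r j + comp_op Nop K r j"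
      unfolding Ge by (rule comp_add_left[OF one_C0 NC0 G1_C0[OF KG1]])
    also have "\<dots> = K r j + comp_op Nop K r j" unfolding comp_one_left ..
    also have "\<dots> = one_op r j" using Kj[of r j] unfolding trKe by simp
    finally show ?thesis .
  qed
  then have "comp_op G K = one_op" by (intro ext)
  then show ?thesis using KG1 by blast
qed

lemma inv_char:
  assumes G: "G \<in> G1"
  shows "inv_op G \<in> G1" "comp_op G (inv_op G) = one_op" "comp_op (inv_op G) G = one_op"
proof -
  obtain K where K: "K \<in> G1" "comp_op G K = one_op" using inverse_exists[OF G] by blast
  have KG: "comp_op K G = one_op"
  proof (rule faithful)
    fix n
    define v where "v = act G (dlt n)"
    have bv: "bnd (int n) v" unfolding v_def by (rule act_bnd[OF G1_C0[OF G] bnd_dlt])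
    define u where "u = act K v"
    have bu: "bnd (int n) u" unfolding u_def by (rule act_bnd[OF G1_C0[OF K(1)] bv])
    have "act G u = v"
    proof
      fix j
      have "act G u j = act (comp_op G K) v j"
        unfolding u_def by (rule act_comp[OF G1_C0[OF G] G1_C0[OF K(1)] bv, symmetric])
      then show "act G u j = v j" unfolding K(2) act_one .
    qed
    then have "act G u = act G (dlt n)" unfolding v_def .
    then have ue: "u = dlt n" by (rule G_inj[OF G bu bnd_dlt])
    show "act (comp_op K G) (dlt n) = act one_op (dlt n)"
    proof
      fix j
      have "act (comp_op K G) (dlt n) j = act K (act G (dlt n)) j"
        by (rule act_comp[OF G1_C0[OF K(1)] G1_C0[OF G] bnd_dlt])
      also have "\<dots> = u j" unfolding u_def v_def ..
      finally show "act (comp_op K G) (dlt n) j = act one_op (dlt n) j" unfolding ue act_one .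
    qed
  qed
  have "inv_op G = K" unfolding inv_op_def
  proof (rule the_equality)
    show "minus_op K one_op \<in> Dminus \<and> comp_op G K = one_op \<and> comp_op K G = one_op"
      using K KG G1_iff by blast
  next
    fix K' assume K': "minus_op K' one_op \<in> Dminus \<and> comp_op G K' = one_op \<and> comp_op K' G = one_op"
    then have K'G1: "K' \<in> G1" using G1_iff by blast
    show "K' = K"
    proof (rule faithful)
      fix n
      have e: "act G (act L (dlt n)) = dlt n" if "L \<in> G1" "comp_op G L = one_op" for L
      proof
        fix j
        have "act G (act L (dlt n)) j = act (comp_op G L) (dlt n) j"
          by (rule act_comp[OF G1_C0[OF G] G1_C0[OF that(1)] bnd_dlt, symmetric])
        then show "act G (act L (dlt n)) j = dlt n j" unfolding that(2) act_one .
      qed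
      have "act G (act K' (dlt n)) = act G (act K (dlt n))"
        using e[OF K'G1] e[OF K(1) K(2)] K' by simp
      then show "act K' (dlt n) = act K (dlt n)"
        by (rule G_inj[OF G act_bnd[OF G1_C0[OF K'G1] bnd_dlt] act_bnd[OF G1_C0[OF K(1)] bnd_dlt]])
    qed
  qed
  then show "inv_op G \<in> G1" "comp_op G (inv_op G) = one_op" "comp_op (inv_op G) G = one_op"
    using K KG by auto
qed


section \<open>Wave function and main theorem\<close>

lemma wave_char:
  assumes W: "W \<in> Gr0"
  shows "act (satoG W) (dlt 0) \<in> W" "act (satoG W) (dlt 0) \<in> onePlusHm"
    "\<And>psi. psi \<in> W \<Longrightarrow> psi \<in> onePlusHm \<Longrightarrow> psi = act (satoG W) (dlt 0)"
    "wave W = act (satoG W) (dlt 0)"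
proof -
  define G where "G = satoG W"
  have G: "G \<in> G1" unfolding G_def by (rule satoG_char(1)[OF W])
  have w0: "act G (dlt 0) j = G 0 j" for j unfolding act_delta by simp
  show w0W: "act (satoG W) (dlt 0) \<in> W" by (rule satoG_char(2)[OF W])
  have w0H: "act G (dlt 0) \<in> onePlusHm"
    unfolding onePlusHm_def w0 using G1D[OF G] by (auto simp: one_op_def)
  then show "act (satoG W) (dlt 0) \<in> onePlusHm" unfolding G_def .
  have uq: "psi = act G (dlt 0)" if "psi \<in> W" "psi \<in> onePlusHm" for psi
  proof (rule W_inj[OF W that(1)])
    show "act G (dlt 0) \<in> W" unfolding G_def by (rule w0W)
    show "pplus psi = pplus (act G (dlt 0))"
    proof
      fix n
      show "pplus psi n = pplus (act G (dlt 0)) n"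
        using that(2) w0H unfolding pplus_def onePlusHm_def
        by (cases "n = 0"; cases "0 < n") auto
    qed
  qed
  then show "\<And>psi. psi \<in> W \<Longrightarrow> psi \<in> onePlusHm \<Longrightarrow> psi = act (satoG W) (dlt 0)"
    unfolding G_def .
  show "wave W = act (satoG W) (dlt 0)" unfolding wave_def
  proof (rule the_equality)
    show "act (satoG W) (dlt 0) \<in> W \<and> act (satoG W) (dlt 0) \<in> onePlusHm"
      using w0W w0H unfolding G_def by blast
  next
    fix psi assume "psi \<in> W \<and> psi \<in> onePlusHm"
    then show "psi = act (satoG W) (dlt 0)" using uq unfolding G_def by blast
  qed
qed

lemma part2:
  assumes W: "W \<in> Gr0"
  shows "(\<Psi> \<in> onePlusHm \<and> act (P_W W) \<Psi> = (\<lambda>n. 0)) \<longleftrightarrow> \<Psi> = wave W"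
proof -
  define G where "G = satoG W"
  define K where "K = inv_op G"
  have G: "G \<in> G1" unfolding G_def by (rule satoG_char(1)[OF W])
  have K: "K \<in> G1" "comp_op G K = one_op" "comp_op K G = one_op"
    unfolding K_def using inv_char[OF G] by auto
  have GC: "G \<in> C0" by (rule G1_C0[OF G])
  have KC: "K \<in> C0" by (rule G1_C0[OF K(1)])
  have CC: "comp_op G dz_op \<in> C0" by (rule comp_C0[OF GC dz_C0])
  have PW: "P_W W = comp_op (comp_op G dz_op) K" unfolding P_W_def G_def K_def ..
  have actP: "act (P_W W) f j = act G (act dz_op (act K f)) j" if f: "bnd N f" for f N j
  proof -
    have bK: "bnd N (act K f)" by (rule act_bnd[OF KC f])
    have "act (P_W W) f j = act (comp_op G dz_op) (act K f) j"
      unfolding PW by (rule act_comp[OF CC KC f])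
    also have "\<dots> = act G (act dz_op (act K f)) j" by (rule act_comp[OF GC dz_C0 bK])
    finally show ?thesis .
  qed
  define w0 where "w0 = act G (dlt 0)"
  have wave: "wave W = w0" unfolding w0_def G_def by (rule wave_char(4)[OF W])
  have w0W: "w0 \<in> W" unfolding w0_def G_def by (rule wave_char(1)[OF W])
  have w0H: "w0 \<in> onePlusHm" unfolding w0_def G_def by (rule wave_char(2)[OF W])
  show ?thesis
  proof
    assume a: "\<Psi> \<in> onePlusHm \<and> act (P_W W) \<Psi> = (\<lambda>n. 0)"
    have bP: "bnd 0 \<Psi>" using a unfolding onePlusHm_def bnd_def by auto
    define u where "u = act K \<Psi>"
    have bu: "bnd 0 u" unfolding u_def by (rule act_bnd[OF KC bP])
    define v where "v = act dz_op u"
    have bv: "bnd 0 v" unfolding v_def by (rule act_bnd[OF dz_C0 bu])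
    have "act G v = act G (\<lambda>_. 0)"
    proof
      fix j
      have "act G v j = act (P_W W) \<Psi> j" unfolding v_def u_def by (rule actP[OF bP, symmetric])
      then show "act G v j = act G (\<lambda>_. 0) j" using a unfolding act_zero by simp
    qed
    moreover have bz: "bnd 0 (\<lambda>_::int. 0::complex)" by (simp add: bnd_def)
    ultimately have v0: "v = (\<lambda>_. 0)" using G_inj[OF G bv] by blast
    have ul: "u l = 0" if "l \<noteq> 0" for l
    proof -
      have "v (l - 1) = of_int l * u l" unfolding v_def act_dz by simp
      then show ?thesis using v0 that by simp
    qed
    have ue: "u = (\<lambda>l. u 0 * dlt 0 l)"
    proof
      fix l show "u l = u 0 * dlt 0 l" using ul[of l] by (cases "l = 0") (auto simp: dlt_def)
    qed
    have "\<Psi> = act G u"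
    proof
      fix j
      have "act G u j = act (comp_op G K) \<Psi> j" unfolding u_def by (rule act_comp[OF GC KC bP, symmetric])
      then show "\<Psi> j = act G u j" unfolding K(2) act_one by simp
    qed
    also have "\<dots> = (\<lambda>j. u 0 * w0 j)" unfolding w0_def by (subst ue) (rule act_scale)
    finally have "\<Psi> = (\<lambda>j. u 0 * w0 j)" .
    then have "\<Psi> \<in> W" using Gr0D(4)[OF W w0W] by simp
    then have "\<Psi> = act (satoG W) (dlt 0)" using wave_char(3)[OF W] a by blast
    then show "\<Psi> = wave W" using wave_char(4)[OF W] by simp
  next
    assume e: "\<Psi> = wave W"
    have e1: "act K w0 = dlt 0"
    proof
      fix j
      have "act K w0 j = act (comp_op K G) (dlt 0) j"
        unfolding w0_def by (rule act_comp[OF KC GC bnd_dlt, symmetric])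
      then show "act K w0 j = dlt 0 j" unfolding K(3) act_one .
    qed
    have e2: "act dz_op (dlt 0) = (\<lambda>_. 0)"
    proof
      fix j show "act dz_op (dlt 0) j = 0" unfolding act_dz by (cases "j + 1 = 0") (auto simp: dlt_def)
    qed
    have bw: "bnd 0 w0" using w0H unfolding onePlusHm_def bnd_def by auto
    have "act (P_W W) w0 = (\<lambda>_. 0)"
    proof
      fix j show "act (P_W W) w0 j = 0" unfolding actP[OF bw] e1 e2 act_zero by simp
    qed
    then show "\<Psi> \<in> onePlusHm \<and> act (P_W W) \<Psi> = (\<lambda>n. 0)" using e wave w0H by simp
  qed
qed

theorem mainTheorem2:
  shows "(\<forall>P\<in>Pclass.
            (\<exists>\<Psi>\<in>onePlusHm. act P \<Psi> = (\<lambda>n. 0)) \<and>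
            (\<forall>\<Psi>1\<in>Hsp. \<forall>\<Psi>2\<in>Hsp. \<Psi>1 \<noteq> (\<lambda>n. 0) \<longrightarrow> act P \<Psi>1 = (\<lambda>n. 0) \<longrightarrow>
                act P \<Psi>2 = (\<lambda>n. 0) \<longrightarrow> (\<exists>c::complex. \<Psi>2 = (\<lambda>n. c * \<Psi>1 n))))
       \<and> (\<forall>W\<in>Gr0. \<forall>\<Psi>. (\<Psi> \<in> onePlusHm \<and> act (P_W W) \<Psi> = (\<lambda>n. 0)) \<longleftrightarrow> \<Psi> = wave W)"
  using part1 part2 by blast


end
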